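(* Let $\mathcal A$ be a $C^*$-algebra with identity $1$, let $\delta\colon\mathcal A\to\mathcal A$ be a $^*$-endomorphism, and let $\delta_{*1},\delta_{*2}$ be two non-degenerate transfer operators for $(\mathcal A,\delta)$. Then $\delta_{*1}(1)=\delta_{*2}(1)$ and $\delta_{*1}(\mathcal A)=\delta_{*2}(\mathcal A)$.
   Context: A transfer operator for $(\mathcal A,\delta)$ is a continuous positive linear map $\delta_*\colon\mathcal A\to\mathcal A$ such that $\delta_*(\delta(a)b)=a\,\delta_*(b)$ for all $a,b\in\mathcal A$. A transfer operator $\delta_*$ is called non-degenerate if $\delta(\delta_*(1))=\delta(1)$ (equivalently, $\delta\circ\delta_*\circ\delta=\delta$). *)

theory Defs
  imports "HOL-Analysis.Analysis"
begin

text \<open>A unital C*-algebra: a complex Banach algebra with identity (the real Banach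
algebra structure comes from the type class, complex scalar multiplication is the
parameter scaleC, compatible with the real one), with an involution star satisfying
the C*-identity.\<close>

locale cstar_algebra =
  fixes scaleC :: "complex \<Rightarrow> 'a::{real_normed_algebra_1, banach} \<Rightarrow> 'a"
    and star :: "'a \<Rightarrow> 'a"
  assumes scaleC_add_right: "scaleC c (x + y) = scaleC c x + scaleC c y"
    and scaleC_add_left: "scaleC (c + d) x = scaleC c x + scaleC d x"
    and scaleC_scaleC: "scaleC c (scaleC d x) = scaleC (c * d) x"
    and scaleC_one: "scaleC 1 x = x"
    and scaleC_of_real: "scaleC (complex_of_real r) x = scaleR r x"
    and norm_scaleC: "norm (scaleC c x) = cmod c * norm x"
    and scaleC_mult_left: "scaleC c (x * y) = scaleC c x * y"
    and scaleC_mult_right: "scaleC c (x * y) = x * scaleC c y"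
    and star_add: "star (x + y) = star x + star y"
    and star_scaleC: "star (scaleC c x) = scaleC (cnj c) (star x)"
    and star_mult: "star (x * y) = star y * star x"
    and star_star: "star (star x) = x"
    and cstar_identity: "norm (star x * x) = (norm x)\<^sup>2"

definition clinear_map :: "(complex \<Rightarrow> 'a::real_normed_algebra_1 \<Rightarrow> 'a) \<Rightarrow> ('a \<Rightarrow> 'a) \<Rightarrow> bool" where
  "clinear_map scaleC f \<longleftrightarrow>
     (\<forall>x y. f (x + y) = f x + f y) \<and> (\<forall>c x. f (scaleC c x) = scaleC c (f x))"

definition positive_elem :: "('a::real_normed_algebra_1 \<Rightarrow> 'a) \<Rightarrow> 'a \<Rightarrow> bool" where
  "positive_elem star a \<longleftrightarrow> (\<exists>b. a = star b * b)"

definition positive_map :: "('a::real_normed_algebra_1 \<Rightarrow> 'a) \<Rightarrow> ('a \<Rightarrow> 'a) \<Rightarrow> bool" where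
  "positive_map star f \<longleftrightarrow> (\<forall>a. positive_elem star a \<longrightarrow> positive_elem star (f a))"

definition star_endomorphism ::
  "(complex \<Rightarrow> 'a::real_normed_algebra_1 \<Rightarrow> 'a) \<Rightarrow> ('a \<Rightarrow> 'a) \<Rightarrow> ('a \<Rightarrow> 'a) \<Rightarrow> bool" where
  "star_endomorphism scaleC star \<delta> \<longleftrightarrow>
     clinear_map scaleC \<delta> \<and> (\<forall>a b. \<delta> (a * b) = \<delta> a * \<delta> b) \<and> (\<forall>a. \<delta> (star a) = star (\<delta> a))"

definition transfer_operator ::
  "(complex \<Rightarrow> 'a::real_normed_algebra_1 \<Rightarrow> 'a) \<Rightarrow> ('a \<Rightarrow> 'a) \<Rightarrow> ('a \<Rightarrow> 'a) \<Rightarrow> ('a \<Rightarrow> 'a) \<Rightarrow> bool" where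
  "transfer_operator scaleC star \<delta> T \<longleftrightarrow>
     continuous_on UNIV T \<and> positive_map star T \<and> clinear_map scaleC T \<and>
     (\<forall>a b. T (\<delta> a * b) = a * T b)"

definition nondegenerate_transfer_operator ::
  "(complex \<Rightarrow> 'a::real_normed_algebra_1 \<Rightarrow> 'a) \<Rightarrow> ('a \<Rightarrow> 'a) \<Rightarrow> ('a \<Rightarrow> 'a) \<Rightarrow> ('a \<Rightarrow> 'a) \<Rightarrow> bool" where
  "nondegenerate_transfer_operator scaleC star \<delta> T \<longleftrightarrow>
     transfer_operator scaleC star \<delta> T \<and> \<delta> (T 1) = \<delta> 1"

end

theory Submission
  imports Defs
begin

context cstar_algebra
begin

lemma sc_zero_right: "scaleC c 0 = 0"
  using scaleC_add_right[of c 0 0] by simp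

lemma sc_zero_left: "scaleC 0 x = 0"
  using scaleC_of_real[of 0 x] by simp

lemma star_one: "star 1 = 1"
proof -
  have "star 1 = star 1 * star (star 1)" by (simp only: star_star mult_1_right)
  also have "\<dots> = star (star 1 * 1)" by (simp only: star_mult)
  also have "\<dots> = 1" by (simp only: star_star mult_1_right)
  finally show ?thesis .
qed

lemma sc_inv4: "scaleC (1/4) (scaleC 4 x) = x"
  by (simp add: scaleC_scaleC scaleC_one)

lemma sc_cancel4: "scaleC 4 x = scaleC 4 y \<Longrightarrow> x = y"
  by (metis sc_inv4)

lemma sc_mult_both: "scaleC a u * scaleC b v = scaleC (a*b) (u * v)"
  by (metis scaleC_mult_left scaleC_mult_right scaleC_scaleC)

lemma Pexp:
  "scaleC c (star (x + scaleC c 1) * (x + scaleC c 1)) =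
     scaleC c (star x * x) + scaleC (c*c) (star x) + scaleC (c * cnj c) x + scaleC (c * cnj c * c) 1"
proof -
  have s: "star (x + scaleC c 1) = star x + scaleC (cnj c) 1"
    by (simp add: star_add star_scaleC star_one)
  have "star (x + scaleC c 1) * (x + scaleC c 1) =
     star x * x + scaleC c (star x) + scaleC (cnj c) x + scaleC (cnj c * c) 1"
  proof -
    have "star (x + scaleC c 1) * (x + scaleC c 1) =
      star x * x + star x * scaleC c 1 + scaleC (cnj c) 1 * x + scaleC (cnj c) 1 * scaleC c 1"
      unfolding s by (simp only: distrib_left distrib_right add_ac)
    also have "star x * scaleC c 1 = scaleC c (star x)"
      using scaleC_mult_right[of c "star x" 1] by simp
    also have "scaleC (cnj c) 1 * x = scaleC (cnj c) x"
      using scaleC_mult_left[of "cnj c" 1 x] by simp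
    also have "scaleC (cnj c) 1 * scaleC c 1 = scaleC (cnj c * c) 1"
      using sc_mult_both[of "cnj c" 1 c 1] by simp
    finally show ?thesis .
  qed
  then show ?thesis by (simp add: scaleC_add_right scaleC_scaleC mult.assoc)
qed

lemma sum4: "scaleC a u + scaleC b u + scaleC c u + scaleC d u = scaleC (a+b+c+d) u"
  by (simp add: scaleC_add_left)

definition PP :: "'a \<Rightarrow> complex \<Rightarrow> 'a" where
  "PP x c = star (x + scaleC c 1) * (x + scaleC c 1)"

lemma polar:
  "scaleC 4 x = scaleC 1 (PP x 1) + scaleC \<i> (PP x \<i>) + scaleC (-1) (PP x (-1)) + scaleC (-\<i>) (PP x (-\<i>))"
proof -
  have "scaleC 1 (PP x 1) + scaleC \<i> (PP x \<i>) + scaleC (-1) (PP x (-1)) + scaleC (-\<i>) (PP x (-\<i>))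
    = (scaleC 1 (star x * x) + scaleC \<i> (star x * x) + scaleC (-1) (star x * x) + scaleC (-\<i>) (star x * x))
    + (scaleC (1*1) (star x) + scaleC (\<i>*\<i>) (star x) + scaleC ((-1)*(-1)) (star x) + scaleC ((-\<i>)*(-\<i>)) (star x))
    + (scaleC (1 * cnj 1) x + scaleC (\<i> * cnj \<i>) x + scaleC ((-1) * cnj (-1)) x + scaleC ((-\<i>) * cnj (-\<i>)) x)
    + (scaleC (1 * cnj 1 * 1) 1 + scaleC (\<i> * cnj \<i> * \<i>) 1 + scaleC ((-1) * cnj (-1) * (-1)) 1 + scaleC ((-\<i>) * cnj (-\<i>) * (-\<i>)) 1)"
    unfolding PP_def Pexp by (simp only: add_ac)
  also have "\<dots> = scaleC 4 x"
    unfolding sum4 by (simp add: sc_zero_left)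
  finally show ?thesis by simp
qed

lemma star_positive: "positive_elem star a \<Longrightarrow> star a = a"
  unfolding positive_elem_def by (auto simp: star_mult star_star)

lemma PP_pos: "positive_elem star (PP x c)"
  unfolding positive_elem_def PP_def by blast

lemma clin_add4: "clinear_map scaleC f \<Longrightarrow>
  f (scaleC a A + scaleC b B + scaleC c C + scaleC d D) = scaleC a (f A) + scaleC b (f B) + scaleC c (f C) + scaleC d (f D)"
  unfolding clinear_map_def by simp

lemma star_add4:
  "star (scaleC a A + scaleC b B + scaleC c C + scaleC d D) = scaleC (cnj a) (star A) + scaleC (cnj b) (star B) + scaleC (cnj c) (star C) + scaleC (cnj d) (star D)"
  by (simp add: star_add star_scaleC)

lemma T_star:
  assumes "clinear_map scaleC T" "positive_map star T"
  shows "T (star x) = star (T x)"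
proof -
  have pT: "star (T (PP x c)) = T (PP x c)" for c
    using assms(2) PP_pos star_positive unfolding positive_map_def by blast
  have pP: "star (PP x c) = PP x c" for c
    using PP_pos star_positive by blast
  have e1: "scaleC 4 (star x) = scaleC 1 (PP x 1) + scaleC (-\<i>) (PP x \<i>) + scaleC (-1) (PP x (-1)) + scaleC \<i> (PP x (-\<i>))"
    using arg_cong[OF polar[of x], of star] unfolding star_add4 pP by (simp add: star_scaleC)
  have "scaleC 4 (T (star x)) = T (scaleC 4 (star x))"
    using assms(1) unfolding clinear_map_def by simp
  also have "\<dots> = scaleC 1 (T (PP x 1)) + scaleC (-\<i>) (T (PP x \<i>)) + scaleC (-1) (T (PP x (-1))) + scaleC \<i> (T (PP x (-\<i>)))"
    unfolding e1 using clin_add4[OF assms(1)] by simp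
  also have "\<dots> = star (scaleC 1 (T (PP x 1)) + scaleC \<i> (T (PP x \<i>)) + scaleC (-1) (T (PP x (-1))) + scaleC (-\<i>) (T (PP x (-\<i>))))"
    unfolding star_add4 pT by simp
  also have "\<dots> = star (T (scaleC 4 x))"
    unfolding polar clin_add4[OF assms(1)] ..
  also have "\<dots> = scaleC 4 (star (T x))"
    using assms(1) unfolding clinear_map_def by (simp add: star_scaleC)
  finally show ?thesis by (rule sc_cancel4)
qed

end

theorem proposition5:
  fixes scaleC :: "complex \<Rightarrow> 'a::{real_normed_algebra_1, banach} \<Rightarrow> 'a"
    and star :: "'a \<Rightarrow> 'a"
    and \<delta> T1 T2 :: "'a \<Rightarrow> 'a"
  assumes "cstar_algebra scaleC star"
    and "star_endomorphism scaleC star \<delta>"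
    and "nondegenerate_transfer_operator scaleC star \<delta> T1"
    and "nondegenerate_transfer_operator scaleC star \<delta> T2"
  shows "T1 1 = T2 1 \<and> range T1 = range T2"
proof -
  interpret C: cstar_algebra scaleC star by fact
  have dstar: "\<delta> (star a) = star (\<delta> a)" for a
    using assms(2) unfolding star_endomorphism_def by blast
  have gen: "(\<forall>a b. T (\<delta> a * b) = a * T b) \<and> (\<forall>x. T (star x) = star (T x)) \<and>
      (\<forall>a b. T (b * \<delta> a) = T b * a) \<and> \<delta> (T 1) = \<delta> 1"
    if "nondegenerate_transfer_operator scaleC star \<delta> T" for T
  proof -
    have L: "T (\<delta> a * b) = a * T b" for a b
      using that unfolding nondegenerate_transfer_operator_def transfer_operator_def by blast
    have S: "T (star x) = star (T x)" for x
      using that C.T_star unfolding nondegenerate_transfer_operator_def transfer_operator_def by blast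
    have R: "T (b * \<delta> a) = T b * a" for a b
    proof -
      have "T (b * \<delta> a) = star (star (T (b * \<delta> a)))" by (simp only: C.star_star)
      also have "\<dots> = star (T (star (b * \<delta> a)))" by (simp only: S)
      also have "\<dots> = star (T (\<delta> (star a) * star b))"
        by (simp only: C.star_mult dstar)
      also have "\<dots> = star (star a * T (star b))" by (simp only: L)
      also have "\<dots> = star (T (star b)) * a" by (simp only: C.star_mult C.star_star)
      also have "\<dots> = T b * a" by (simp only: S C.star_star)
      finally show ?thesis .
    qed
    show ?thesis using L S R that unfolding nondegenerate_transfer_operator_def by blast
  qed
  from gen[OF assms(3)] have L1: "\<And>a b. T1 (\<delta> a * b) = a * T1 b"
    and S1: "\<And>x. T1 (star x) = star (T1 x)" and R1: "\<And>a b. T1 (b * \<delta> a) = T1 b * a"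
    and N1: "\<delta> (T1 1) = \<delta> 1" by blast+
  from gen[OF assms(4)] have L2: "\<And>a b. T2 (\<delta> a * b) = a * T2 b"
    and S2: "\<And>x. T2 (star x) = star (T2 x)" and R2: "\<And>a b. T2 (b * \<delta> a) = T2 b * a"
    and N2: "\<delta> (T2 1) = \<delta> 1" by blast+
  have a1: "T2 1 * T1 1 = T1 1"
    using L1[of "T2 1" 1] L1[of 1 1] N2 by simp
  have a2: "T1 1 * T2 1 = T2 1"
    using L2[of "T1 1" 1] L2[of 1 1] N1 by simp
  have s1: "star (T1 1) = T1 1" using S1[of 1] C.star_one by simp
  have s2: "star (T2 1) = T2 1" using S2[of 1] C.star_one by simp
  have p: "T1 1 = T2 1"
  proof -
    have "T1 1 = star (T2 1 * T1 1)" using a1 s1 by simp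
    also have "\<dots> = T1 1 * T2 1" by (simp only: s1 s2 C.star_mult)
    finally show ?thesis using a2 by simp
  qed
  have r12: "range T1 \<subseteq> range T2"
  proof
    fix y assume "y \<in> range T1"
    then obtain b where y: "y = T1 b" by blast
    have "T1 b = T1 (b * \<delta> 1)" using R1[of b 1] by simp
    also have "\<dots> = T1 (b * \<delta> (T1 1))" using N1 by simp
    also have "\<dots> = T1 b * T2 1" using R1[of b "T1 1"] p by simp
    also have "\<dots> = T2 (\<delta> (T1 b) * 1)" using L2[of "T1 b" 1] by simp
    finally show "y \<in> range T2" using y by blast
  qed
  have r21: "range T2 \<subseteq> range T1"
  proof
    fix y assume "y \<in> range T2"
    then obtain b where y: "y = T2 b" by blast
    have "T2 b = T2 (b * \<delta> 1)" using R2[of b 1] by simp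
    also have "\<dots> = T2 (b * \<delta> (T2 1))" using N2 by simp
    also have "\<dots> = T2 b * T1 1" using R2[of b "T2 1"] p by simp
    also have "\<dots> = T1 (\<delta> (T2 b) * 1)" using L1[of "T2 b" 1] by simp
    finally show "y \<in> range T1" using y by blast
  qed
  show ?thesis using p r12 r21 by blast
qed

end
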